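(* Let $G$ and $H$ be two connected graphs of order $n$ with equal Laplacian spectrum. If $Z(G)\neq Z(H)$, then for every $k\geq 1$, $\vee_k G$ and $\vee_k H$ have equal Laplacian spectrum and $Z(\vee_k G)\neq Z(\vee_k H)$. Likewise, if $Z_{-}(G)\neq Z_{-}(H)$, then for every $k\geq 1$, $\vee_k G$ and $\vee_k H$ have equal Laplacian spectrum and $Z_{-}(\vee_k G)\neq Z_{-}(\vee_k H)$.
   Context: Graphs are finite, simple, undirected. The Laplacian matrix of $G$ is $L=D-A$ ($D$ the diagonal degree matrix, $A$ the adjacency matrix). The join $G\vee H$ is the disjoint union of $G$ and $H$ together with all edges $\{u,v\}$, $u\in V(G)$, $v\in V(H)$. For a connected graph $G$, define $\vee_0 G=G$ and $\vee_{k+1}G=(\vee_k G)\vee G$ for $k\geq 0$ (using a fresh copy of $G$ each time). The zero forcing number $Z(G)$ is the minimum size of a set $S\subseteq V(G)$ such that, if the vertices of $S$ are colored blue and all others white, repeated application of the rule "a blue vertex with exactly one white neighbor forces that neighbor to become blue" eventually makes every vertex blue. The skew zero forcing number $Z_{-}(G)$ is defined in the same way but with the rule "any vertex (blue or white) that has exactly one white neighbor forces that neighbor to become blue". *)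

theory Defs
  imports "HOL-Computational_Algebra.Polynomial" "HOL-Combinatorics.Permutations"
begin

type_synonym 'a graph = "'a set \<times> 'a set set"

definition verts :: "'a graph \<Rightarrow> 'a set" where "verts G = fst G"
definition edges :: "'a graph \<Rightarrow> 'a set set" where "edges G = snd G"

definition simple_graph :: "'a graph \<Rightarrow> bool" where
  "simple_graph G \<longleftrightarrow> finite (verts G) \<and>
     (\<forall>e\<in>edges G. \<exists>u v. e = {u, v} \<and> u \<noteq> v \<and> u \<in> verts G \<and> v \<in> verts G)"

definition adj :: "'a graph \<Rightarrow> 'a \<Rightarrow> 'a \<Rightarrow> bool" where
  "adj G u v \<longleftrightarrow> {u, v} \<in> edges G"

definition nbhd :: "'a graph \<Rightarrow> 'a \<Rightarrow> 'a set" where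
  "nbhd G u = {v \<in> verts G. adj G u v}"

definition connected_graph :: "'a graph \<Rightarrow> bool" where
  "connected_graph G \<longleftrightarrow> simple_graph G \<and> verts G \<noteq> {} \<and>
     (\<forall>u\<in>verts G. \<forall>v\<in>verts G. (u, v) \<in> {(x, y). adj G x y}\<^sup>*)"

definition degree :: "'a graph \<Rightarrow> 'a \<Rightarrow> nat" where
  "degree G v = card (nbhd G v)"

definition laplacian :: "'a graph \<Rightarrow> 'a \<Rightarrow> 'a \<Rightarrow> real" where
  "laplacian G u v = (if u = v then real (degree G u) else if adj G u v then -1 else 0)"

text \<open>Characteristic polynomial det(xI - M) of a matrix indexed by a finite set V
  (Leibniz formula).\<close>
definition charpoly_on :: "'a set \<Rightarrow> ('a \<Rightarrow> 'a \<Rightarrow> real) \<Rightarrow> real poly" where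
  "charpoly_on V M = (\<Sum>p \<in> {p. p permutes V}. of_int (sign p) *
      (\<Prod>v\<in>V. (if v = p v then [:0, 1:] else 0) - [:M v (p v):]))"

definition lap_spectrum :: "'a graph \<Rightarrow> real multiset" where
  "lap_spectrum G = proots (charpoly_on (verts G) (laplacian G))"

text \<open>Join of two graphs with disjoint vertex sets.\<close>
definition graph_join :: "'a graph \<Rightarrow> 'a graph \<Rightarrow> 'a graph" where
  "graph_join G H = (verts G \<union> verts H,
     edges G \<union> edges H \<union> {{u, v} | u v. u \<in> verts G \<and> v \<in> verts H})"

definition graph_copy :: "nat \<Rightarrow> 'a graph \<Rightarrow> (nat \<times> 'a) graph" where
  "graph_copy i G = ((\<lambda>v. (i, v)) ` verts G, (\<lambda>e. (\<lambda>v. (i, v)) ` e) ` edges G)"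

text \<open>Iterated join: \<vee>_0 G = G, \<vee>_{k+1} G = (\<vee>_k G) \<vee> G (fresh copy each time).\<close>
fun iter_join :: "nat \<Rightarrow> 'a graph \<Rightarrow> (nat \<times> 'a) graph" where
  "iter_join 0 G = graph_copy 0 G"
| "iter_join (Suc k) G = graph_join (iter_join k G) (graph_copy (Suc k) G)"

definition zf_step :: "'a graph \<Rightarrow> 'a set \<Rightarrow> 'a set \<Rightarrow> bool" where
  "zf_step G B B' \<longleftrightarrow> (\<exists>u w. u \<in> B \<and> {x \<in> nbhd G u. x \<notin> B} = {w} \<and> B' = insert w B)"

definition szf_step :: "'a graph \<Rightarrow> 'a set \<Rightarrow> 'a set \<Rightarrow> bool" where
  "szf_step G B B' \<longleftrightarrow> (\<exists>u w. u \<in> verts G \<and> {x \<in> nbhd G u. x \<notin> B} = {w} \<and> B' = insert w B)"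

definition zero_forcing_set :: "'a graph \<Rightarrow> 'a set \<Rightarrow> bool" where
  "zero_forcing_set G S \<longleftrightarrow> S \<subseteq> verts G \<and> (zf_step G)\<^sup>*\<^sup>* S (verts G)"

definition skew_zero_forcing_set :: "'a graph \<Rightarrow> 'a set \<Rightarrow> bool" where
  "skew_zero_forcing_set G S \<longleftrightarrow> S \<subseteq> verts G \<and> (szf_step G)\<^sup>*\<^sup>* S (verts G)"

definition Z :: "'a graph \<Rightarrow> nat" where
  "Z G = (LEAST k. \<exists>S. zero_forcing_set G S \<and> card S = k)"

definition Zskew :: "'a graph \<Rightarrow> nat" where
  "Zskew G = (LEAST k. \<exists>S. skew_zero_forcing_set G S \<and> card S = k)"

end

theory Submission
  imports Defs "Jordan_Normal_Form.Char_Poly"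
begin

definition gmap :: "('a \<Rightarrow> 'b) \<Rightarrow> 'a graph \<Rightarrow> 'b graph" where
  "gmap f G = (f ` verts G, (\<lambda>e. f ` e) ` edges G)"

definition gstep :: "bool \<Rightarrow> 'a graph \<Rightarrow> 'a set \<Rightarrow> 'a set \<Rightarrow> bool" where
  "gstep s G B B' \<longleftrightarrow> (\<exists>u w. u \<in> (if s then B else verts G) \<and> {x \<in> nbhd G u. x \<notin> B} = {w} \<and> B' = insert w B)"

definition gzfs :: "bool \<Rightarrow> 'a graph \<Rightarrow> 'a set \<Rightarrow> bool" where
  "gzfs s G S \<longleftrightarrow> S \<subseteq> verts G \<and> (gstep s G)\<^sup>*\<^sup>* S (verts G)"

definition gZ :: "bool \<Rightarrow> 'a graph \<Rightarrow> nat" where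
  "gZ s G = (LEAST k. \<exists>S. gzfs s G S \<and> card S = k)"

definition hasnb :: "'a graph \<Rightarrow> bool" where
  "hasnb G \<longleftrightarrow> (\<forall>w\<in>verts G. nbhd G w \<noteq> {})"

lemma Z_gZ: "Z G = gZ True G"
proof -
  have "zf_step G = gstep True G" by (auto simp: fun_eq_iff zf_step_def gstep_def)
  then show ?thesis by (simp add: Z_def gZ_def zero_forcing_set_def gzfs_def)
qed

lemma Zskew_gZ: "Zskew G = gZ False G"
proof -
  have "szf_step G = gstep False G" by (auto simp: fun_eq_iff szf_step_def gstep_def)
  then show ?thesis by (simp add: Zskew_def gZ_def skew_zero_forcing_set_def gzfs_def)
qed

lemma gZ_le: "gzfs s G S \<Longrightarrow> gZ s G \<le> card S"
  unfolding gZ_def by (rule Least_le) blast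

lemma gZ_ex: "\<exists>S. gzfs s G S \<and> card S = gZ s G"
proof -
  have "\<exists>k S. gzfs s G S \<and> card S = k" by (auto simp: gzfs_def)
  from LeastI_ex[OF this] show ?thesis unfolding gZ_def .
qed

lemma simple_adj: "simple_graph G \<Longrightarrow> adj G u v \<Longrightarrow> u \<in> verts G \<and> v \<in> verts G \<and> u \<noteq> v"
proof -
  assume "simple_graph G" "adj G u v"
  then obtain a b where "{u,v} = {a,b}" "a\<noteq>b" "a\<in>verts G" "b\<in>verts G"
    unfolding simple_graph_def adj_def by blast
  then show ?thesis by (auto simp: doubleton_eq_iff)
qed

lemma adj_sym: "adj G u v \<Longrightarrow> adj G v u"
  unfolding adj_def by (simp add: insert_commute)

lemma nbhd_sub: "nbhd G u \<subseteq> verts G" unfolding nbhd_def by auto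

lemma reach_mono: "(gstep s G)\<^sup>*\<^sup>* X Y \<Longrightarrow> X \<subseteq> Y"
  by (induction rule: rtranclp_induct) (auto simp: gstep_def)

lemma reach_sub: "(gstep s G)\<^sup>*\<^sup>* X Y \<Longrightarrow> X \<subseteq> verts G \<Longrightarrow> Y \<subseteq> verts G"
proof (induction rule: rtranclp_induct)
  case (step Y Z)
  then show ?case using nbhd_sub[of G] unfolding gstep_def by blast
qed auto

section \<open>Join\<close>

lemma verts_join: "verts (graph_join A B) = verts A \<union> verts B"
  by (simp add: graph_join_def verts_def)

lemma gjoin_comm: "graph_join A B = graph_join B A"
proof -
  have "{{u, v} | u v. u \<in> verts A \<and> v \<in> verts B} = {{u, v} | u v. u \<in> verts B \<and> v \<in> verts A}"
    by (auto simp: insert_commute)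
  then show ?thesis unfolding graph_join_def by (simp add: Un_ac)
qed

lemma adj_join: "adj (graph_join A B) u v \<longleftrightarrow> adj A u v \<or> adj B u v \<or>
   (u \<in> verts A \<and> v \<in> verts B) \<or> (u \<in> verts B \<and> v \<in> verts A)"
proof -
  have "{u, v} \<in> {{u, v} | u v. u \<in> verts A \<and> v \<in> verts B} \<longleftrightarrow>
     (u \<in> verts A \<and> v \<in> verts B) \<or> (u \<in> verts B \<and> v \<in> verts A)"
    by (auto simp: doubleton_eq_iff)
  then show ?thesis unfolding adj_def graph_join_def edges_def verts_def by auto
qed

locale jn =
  fixes A B :: "'a graph"
  assumes sA: "simple_graph A" and sB: "simple_graph B"
    and disj: "verts A \<inter> verts B = {}"
begin

lemma nbhd_A: assumes u: "u \<in> verts A" shows "nbhd (graph_join A B) u = nbhd A u \<union> verts B"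
proof -
  have "x \<in> nbhd (graph_join A B) u \<longleftrightarrow> x \<in> nbhd A u \<union> verts B" for x
    unfolding nbhd_def verts_join adj_join using simple_adj[OF sA, of u x] simple_adj[OF sB, of u x] disj u by auto
  then show ?thesis by blast
qed

lemma nbhd_B: assumes u: "u \<in> verts B" shows "nbhd (graph_join A B) u = nbhd B u \<union> verts A"
proof -
  have "x \<in> nbhd (graph_join A B) u \<longleftrightarrow> x \<in> nbhd B u \<union> verts A" for x
    unfolding nbhd_def verts_join adj_join using simple_adj[OF sA, of u x] simple_adj[OF sB, of u x] disj u by auto
  then show ?thesis by blast
qed

lemma edges_join: "edges (graph_join A B) = edges A \<union> edges B \<union> {{u, v} | u v. u \<in> verts A \<and> v \<in> verts B}"
  by (simp add: graph_join_def edges_def verts_def)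

lemma simple_join: "simple_graph (graph_join A B)"
proof -
  have f: "finite (verts (graph_join A B))" using sA sB by (simp add: verts_join simple_graph_def)
  have "\<exists>u v. e = {u,v} \<and> u \<noteq> v \<and> u \<in> verts (graph_join A B) \<and> v \<in> verts (graph_join A B)"
    if e: "e \<in> edges (graph_join A B)" for e
  proof -
    consider "e \<in> edges A" | "e \<in> edges B" | "\<exists>u v. e = {u,v} \<and> u \<in> verts A \<and> v \<in> verts B"
      using e unfolding edges_join by blast
    then show ?thesis
    proof cases
      case 1
      then obtain u v where "e = {u,v}" "u \<noteq> v" "u \<in> verts A" "v \<in> verts A" using sA unfolding simple_graph_def by blast
      then show ?thesis unfolding verts_join by blast
    next
      case 2
      then obtain u v where "e = {u,v}" "u \<noteq> v" "u \<in> verts B" "v \<in> verts B" using sB unfolding simple_graph_def by blast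
      then show ?thesis unfolding verts_join by blast
    next
      case 3
      then obtain u v where "e = {u,v}" "u \<in> verts A" "v \<in> verts B" by blast
      moreover have "u \<noteq> v" using calculation disj by blast
      ultimately show ?thesis unfolding verts_join by blast
    qed
  qed
  then show ?thesis using f unfolding simple_graph_def by blast
qed

lemma restrict_reach:
  assumes nb: "hasnb A"
    and r: "(gstep s (graph_join A B))\<^sup>*\<^sup>* X Y" and XB: "verts B \<subseteq> X"
  shows "(gstep s A)\<^sup>*\<^sup>* (X \<inter> verts A) (Y \<inter> verts A)"
  using r
proof (induction rule: rtranclp_induct)
  case base
  then show ?case by simp
next
  case (step Y Y')
  let ?J = "graph_join A B"
  have XY: "X \<subseteq> Y" using step(1) reach_mono by blast
  obtain u w where u: "u \<in> (if s then Y else verts ?J)"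
    and wh: "{x \<in> nbhd ?J u. x \<notin> Y} = {w}" and Y': "Y' = insert w Y"
    using step(2) unfolding gstep_def by blast
  have "w \<in> {x \<in> nbhd ?J u. x \<notin> Y}" using wh by simp
  then have wn: "w \<in> nbhd ?J u" "w \<notin> Y" by simp_all
  have wJ: "w \<in> verts A \<union> verts B" using wn(1) nbhd_sub[of ?J u] verts_join[of A B] by blast
  have wA: "w \<in> verts A" using wJ wn(2) XB XY by blast
  have Y'A: "Y' \<inter> verts A = insert w (Y \<inter> verts A)" using Y' wA by blast
  have uJ: "u \<in> verts A \<union> verts B"
  proof (cases s)
    case True
    then have "u \<in> Y" using u by simp
    moreover have "adj ?J u w" using wn(1) unfolding nbhd_def by simp
    ultimately show ?thesis using simple_adj[OF simple_join, of u w] verts_join[of A B] by simp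
  next
    case False then show ?thesis using u verts_join[of A B] by simp
  qed
  have "gstep s A (Y \<inter> verts A) (Y' \<inter> verts A)"
  proof (cases "u \<in> verts A")
    case True
    have e: "{x \<in> nbhd A u. x \<notin> Y \<inter> verts A} = {x \<in> nbhd ?J u. x \<notin> Y}"
      using nbhd_A[OF True] XB XY nbhd_sub[of A u] by blast
    have "u \<in> (if s then Y \<inter> verts A else verts A)" using True u by (cases s) simp_all
    then show ?thesis unfolding gstep_def using e wh Y'A by blast
  next
    case False
    then have uB: "u \<in> verts B" using uJ by blast
    have VA: "verts A - Y \<subseteq> {w}" using wh nbhd_B[OF uB] by blast
    obtain x where x: "x \<in> nbhd A w" using nb wA unfolding hasnb_def by blast
    have xadj: "adj A w x" "x \<in> verts A" using x unfolding nbhd_def by simp_all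
    have xA: "x \<noteq> w" using simple_adj[OF sA xadj(1)] by auto
    then have xY: "x \<in> Y" using VA xadj(2) by blast
    have "w \<in> nbhd A x" using adj_sym[OF xadj(1)] wA unfolding nbhd_def by simp
    then have e: "{y \<in> nbhd A x. y \<notin> Y \<inter> verts A} = {w}" using VA nbhd_sub[of A x] wn(2) by blast
    have "x \<in> (if s then Y \<inter> verts A else verts A)" using xY xadj(2) by simp
    then show ?thesis unfolding gstep_def using e Y'A by blast
  qed
  with step(3) show ?case by (rule rtranclp.rtrancl_into_rtrancl)
qed

lemma extend_reach:
  assumes r: "(gstep s A)\<^sup>*\<^sup>* X Y" and XA: "X \<subseteq> verts A"
  shows "(gstep s (graph_join A B))\<^sup>*\<^sup>* (X \<union> verts B) (Y \<union> verts B)"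
  using r
proof (induction rule: rtranclp_induct)
  case base
  then show ?case by simp
next
  case (step Y Y')
  have YA: "Y \<subseteq> verts A" using reach_sub[OF step(1) XA] .
  obtain u w where u: "u \<in> (if s then Y else verts A)"
    and wh: "{x \<in> nbhd A u. x \<notin> Y} = {w}" and Y': "Y' = insert w Y"
    using step(2) unfolding gstep_def by blast
  have uA: "u \<in> verts A" using u YA by (auto split: if_splits)
  have "{x \<in> nbhd (graph_join A B) u. x \<notin> Y \<union> verts B} = {w}"
    using wh nbhd_A[OF uA] nbhd_sub[of A u] disj by auto
  moreover have "u \<in> (if s then Y \<union> verts B else verts (graph_join A B))" using u uA verts_join[of A B] by auto
  moreover have "Y' \<union> verts B = insert w (Y \<union> verts B)" using Y' by auto
  ultimately have "gstep s (graph_join A B) (Y \<union> verts B) (Y' \<union> verts B)"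
    unfolding gstep_def by blast
  with step(3) show ?case by (rule rtranclp.rtrancl_into_rtrancl)
qed

lemma gzfs_join: "gzfs s A S \<Longrightarrow> gzfs s (graph_join A B) (S \<union> verts B)"
  using extend_reach unfolding gzfs_def verts_join by blast

lemma full_case:
  assumes nb: "hasnb A" and z: "gzfs s (graph_join A B) S" and XB: "verts B \<subseteq> S"
  shows "gzfs s A (S \<inter> verts A)"
  using restrict_reach[OF nb _ XB, of s "verts (graph_join A B)"] z
  unfolding gzfs_def verts_join by auto

lemma first_case:
  assumes nb: "hasnb A" and z: "gzfs s (graph_join A B) S" and fA: "finite (verts A)" and fB: "finite (verts B)"
    and u: "u \<in> (if s then S else verts (graph_join A B))" and uA: "u \<in> verts A"
    and wh: "{x \<in> nbhd (graph_join A B) u. x \<notin> S} = {w}"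
    and r: "(gstep s (graph_join A B))\<^sup>*\<^sup>* (insert w S) (verts (graph_join A B))"
    and nB: "\<not> verts B \<subseteq> S"
  shows "gZ s A + card (verts B) \<le> card S"
proof -
  have wB: "verts B - S = {w}" using wh nbhd_A[OF uA] nB by auto
  then have wB': "w \<in> verts B" by auto
  have SJ: "S \<subseteq> verts A \<union> verts B" using z unfolding gzfs_def verts_join by auto
  have "gzfs s A (insert w S \<inter> verts A)"
    using full_case[OF nb, of s "insert w S"] r z wB unfolding gzfs_def verts_join by auto
  moreover have eqA: "insert w S \<inter> verts A = S \<inter> verts A" using wB' disj by auto
  ultimately have zA: "gzfs s A (S \<inter> verts A)" by simp
  have nbS: "nbhd A u \<subseteq> S" using wh nbhd_A[OF uA] wB' disj nbhd_sub[of A u] by auto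
  obtain v where v: "v \<in> nbhd A u" using nb uA unfolding hasnb_def by auto
  have vA: "v \<in> verts A" "v \<noteq> u" "v \<in> S" using v nbS simple_adj[OF sA] unfolding nbhd_def by auto
  let ?SA = "S \<inter> verts A - {v}"
  have "{x \<in> nbhd A u. x \<notin> ?SA} = {v}" using nbS v nbhd_sub[of A u] by auto
  moreover have "u \<in> (if s then ?SA else verts A)" using u uA vA by auto
  moreover have "insert v ?SA = S \<inter> verts A" using vA by auto
  ultimately have "gstep s A ?SA (S \<inter> verts A)" unfolding gstep_def by blast
  then have "gzfs s A ?SA" using zA unfolding gzfs_def by (auto intro: converse_rtranclp_into_rtranclp)
  then have le: "gZ s A \<le> card ?SA" by (rule gZ_le)
  have fS: "finite S" using SJ fA fB by (meson finite_UnI finite_subset)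
  have cSA: "card ?SA = card (S \<inter> verts A) - 1" using vA fS by (simp add: card_Diff_singleton)
  have cpos: "card (S \<inter> verts A) \<ge> 1" using vA fS by (metis IntI card_0_eq finite_Int empty_iff less_one not_le)
  have Sd: "S = (S \<inter> verts A) \<union> (verts B - {w})" using SJ wB by auto
  have "card ((S \<inter> verts A) \<union> (verts B - {w})) = card (S \<inter> verts A) + card (verts B - {w})"
    by (rule card_Un_disjoint) (use disj fA fB in auto)
  then have "card S = card (S \<inter> verts A) + card (verts B - {w})" using Sd by simp
  moreover have "card (verts B - {w}) = card (verts B) - 1" using wB' fB by simp
  moreover have "card (verts B) \<ge> 1" using wB' fB by (metis card_0_eq empty_iff less_one not_le)
  ultimately show ?thesis using le cSA cpos by linarith
qed


lemma card_disj_un: "finite X \<Longrightarrow> finite Y \<Longrightarrow> X \<inter> Y = {} \<Longrightarrow> card (X \<union> Y) = card X + card Y"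
  by (rule card_Un_disjoint)

lemma gZ_join:
  assumes nbA: "hasnb A" and nbB: "hasnb B" and fA: "finite (verts A)" and fB: "finite (verts B)"
  shows "gZ s (graph_join A B) = min (gZ s A + card (verts B)) (gZ s B + card (verts A))"
proof -
  interpret BA: jn B A by unfold_locales (use sA sB disj in auto)
  let ?J = "graph_join A B"
  have JBA: "graph_join B A = ?J" by (rule gjoin_comm)
  obtain SA where SA: "gzfs s A SA" "card SA = gZ s A" using gZ_ex by blast
  have SAsub: "SA \<subseteq> verts A" using SA(1) unfolding gzfs_def by simp
  have fSA: "finite SA" using SAsub fA by (rule finite_subset)
  have "card (SA \<union> verts B) = card SA + card (verts B)"
    by (rule card_disj_un[OF fSA fB]) (use SAsub disj in blast)
  moreover have "gZ s ?J \<le> card (SA \<union> verts B)" by (rule gZ_le[OF gzfs_join[OF SA(1)]])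
  ultimately have u1: "gZ s ?J \<le> gZ s A + card (verts B)" using SA(2) by simp
  obtain SB where SB: "gzfs s B SB" "card SB = gZ s B" using gZ_ex by blast
  have SBsub: "SB \<subseteq> verts B" using SB(1) unfolding gzfs_def by simp
  have fSB: "finite SB" using SBsub fB by (rule finite_subset)
  have "card (SB \<union> verts A) = card SB + card (verts A)"
    by (rule card_disj_un[OF fSB fA]) (use SBsub disj in blast)
  moreover have "gzfs s ?J (SB \<union> verts A)" using BA.gzfs_join[OF SB(1)] JBA by simp
  then have "gZ s ?J \<le> card (SB \<union> verts A)" by (rule gZ_le)
  ultimately have u2: "gZ s ?J \<le> gZ s B + card (verts A)" using SB(2) by simp
  obtain S where S: "gzfs s ?J S" "card S = gZ s ?J" using gZ_ex by blast
  have SJ: "S \<subseteq> verts A \<union> verts B" using S(1) unfolding gzfs_def verts_join by simp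
  have fS: "finite S" using SJ fA fB by (meson finite_UnI finite_subset)
  have S': "gzfs s (graph_join B A) S" using S(1) JBA by simp
  have "min (gZ s A + card (verts B)) (gZ s B + card (verts A)) \<le> card S"
  proof (cases "verts B \<subseteq> S")
    case True
    have "gzfs s A (S \<inter> verts A)" by (rule full_case[OF nbA S(1) True])
    then have "gZ s A \<le> card (S \<inter> verts A)" by (rule gZ_le)
    moreover have Seq: "S = (S \<inter> verts A) \<union> verts B" using True SJ by blast
    have "card ((S \<inter> verts A) \<union> verts B) = card (S \<inter> verts A) + card (verts B)"
      using fS fB disj by (intro card_disj_un) auto
    then have "card S = card (S \<inter> verts A) + card (verts B)" using arg_cong[of _ _ card, OF Seq] by simp
    ultimately show ?thesis by linarith
  next
    case nB: False
    show ?thesis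
    proof (cases "verts A \<subseteq> S")
      case True
      have "gzfs s B (S \<inter> verts B)" by (rule BA.full_case[OF nbB S' True])
      then have "gZ s B \<le> card (S \<inter> verts B)" by (rule gZ_le)
      moreover have Seq: "S = (S \<inter> verts B) \<union> verts A" using True SJ by blast
      have "card ((S \<inter> verts B) \<union> verts A) = card (S \<inter> verts B) + card (verts A)"
        using fS fA disj by (intro card_disj_un) auto
      then have "card S = card (S \<inter> verts B) + card (verts A)" using arg_cong[of _ _ card, OF Seq] by simp
      ultimately show ?thesis by linarith
    next
      case nA: False
      have "S \<noteq> verts ?J" using nB unfolding verts_join by blast
      moreover have r: "(gstep s ?J)\<^sup>*\<^sup>* S (verts ?J)" using S(1) unfolding gzfs_def by simp
      ultimately obtain S2 where st: "gstep s ?J S S2" and r2: "(gstep s ?J)\<^sup>*\<^sup>* S2 (verts ?J)"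
        by (metis converse_rtranclpE)
      obtain u w where u: "u \<in> (if s then S else verts ?J)"
        and wh: "{x \<in> nbhd ?J u. x \<notin> S} = {w}" and S2: "S2 = insert w S"
        using st unfolding gstep_def by blast
      have uJ: "u \<in> verts A \<union> verts B" using u SJ verts_join[of A B] by (cases s) auto
      show ?thesis
      proof (cases "u \<in> verts A")
        case True
        have "gZ s A + card (verts B) \<le> card S"
          by (rule first_case[OF nbA S(1) fA fB u True wh _ nB]) (use r2 S2 in simp)
        then show ?thesis by linarith
      next
        case False
        then have uB: "u \<in> verts B" using uJ by blast
        have "gZ s B + card (verts A) \<le> card S"
          by (rule BA.first_case[OF nbB S' fB fA]) (use u uB wh r2 S2 JBA nA in \<open>simp_all split: if_splits\<close>)
        then show ?thesis by linarith
      qed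
    qed
  qed
  then show ?thesis using u1 u2 S(2) by linarith
qed

lemma hasnb_join: "verts A \<noteq> {} \<Longrightarrow> verts B \<noteq> {} \<Longrightarrow> hasnb (graph_join A B)"
  unfolding hasnb_def verts_join using nbhd_A nbhd_B by blast

end

section \<open>Relabelling\<close>

lemma verts_gmap: "verts (gmap f G) = f ` verts G" by (simp add: gmap_def verts_def)
lemma edges_gmap: "edges (gmap f G) = (\<lambda>e. f ` e) ` edges G" by (simp add: gmap_def edges_def)

lemma adj_gmap:
  assumes inj: "inj_on f (verts G)" and sG: "simple_graph G" and uv: "u \<in> verts G" "v \<in> verts G"
  shows "adj (gmap f G) (f u) (f v) \<longleftrightarrow> adj G u v"
proof
  assume "adj G u v"
  then have "f ` {u, v} \<in> (\<lambda>e. f ` e) ` edges G" unfolding adj_def by blast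
  then show "adj (gmap f G) (f u) (f v)" unfolding adj_def edges_gmap by simp
next
  assume "adj (gmap f G) (f u) (f v)"
  then obtain e where e: "e \<in> edges G" "f ` e = {f u, f v}" unfolding adj_def edges_gmap by auto
  then obtain p q where pq: "e = {p, q}" "p \<in> verts G" "q \<in> verts G" using sG unfolding simple_graph_def by blast
  then have "{f p, f q} = {f u, f v}" using e by simp
  then have o: "(f p = f u \<and> f q = f v) \<or> (f p = f v \<and> f q = f u)" by (simp add: doubleton_eq_iff)
  have i1: "\<And>x y. x \<in> verts G \<Longrightarrow> y \<in> verts G \<Longrightarrow> f x = f y \<Longrightarrow> x = y"
    using inj by (simp add: inj_on_def)
  have "(p = u \<and> q = v) \<or> (p = v \<and> q = u)" using o i1[OF pq(2) uv(1)] i1[OF pq(3) uv(2)] i1[OF pq(2) uv(2)] i1[OF pq(3) uv(1)] by blast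
  then have "e = {u, v}" using pq(1) by (auto simp: insert_commute)
  then show "adj G u v" using e unfolding adj_def by simp
qed

lemma simple_gmap:
  assumes inj: "inj_on f (verts G)" and sG: "simple_graph G"
  shows "simple_graph (gmap f G)"
proof -
  have "finite (verts (gmap f G))" using sG by (simp add: verts_gmap simple_graph_def)
  moreover have "\<exists>u v. e = {u,v} \<and> u \<noteq> v \<and> u \<in> verts (gmap f G) \<and> v \<in> verts (gmap f G)"
    if e: "e \<in> edges (gmap f G)" for e
  proof -
    obtain e0 where e0: "e0 \<in> edges G" "e = f ` e0" using e unfolding edges_gmap by blast
    then obtain p q where pq: "e0 = {p,q}" "p \<noteq> q" "p \<in> verts G" "q \<in> verts G" using sG unfolding simple_graph_def by blast
    have "f p \<noteq> f q" using inj pq(2-4) unfolding inj_on_def by blast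
    moreover have "e = {f p, f q}" using e0 pq by simp
    ultimately show ?thesis using pq unfolding verts_gmap by blast
  qed
  ultimately show ?thesis unfolding simple_graph_def by blast
qed

lemma nbhd_gmap:
  assumes inj: "inj_on f (verts G)" and sG: "simple_graph G" and u: "u \<in> verts G"
  shows "nbhd (gmap f G) (f u) = f ` nbhd G u"
proof
  show "nbhd (gmap f G) (f u) \<subseteq> f ` nbhd G u"
  proof
    fix x assume x: "x \<in> nbhd (gmap f G) (f u)"
    then obtain y where y: "y \<in> verts G" "x = f y" unfolding nbhd_def verts_gmap by blast
    then have "adj G u y" using x adj_gmap[OF inj sG u y(1)] unfolding nbhd_def by simp
    then show "x \<in> f ` nbhd G u" using y unfolding nbhd_def by blast
  qed
  show "f ` nbhd G u \<subseteq> nbhd (gmap f G) (f u)"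
  proof
    fix x assume "x \<in> f ` nbhd G u"
    then obtain y where y: "y \<in> verts G" "adj G u y" "x = f y" unfolding nbhd_def by blast
    then show "x \<in> nbhd (gmap f G) (f u)" using adj_gmap[OF inj sG u y(1)] unfolding nbhd_def verts_gmap by simp
  qed
qed

lemma gstep_gmap:
  assumes inj: "inj_on f (verts G)" and sG: "simple_graph G" and Y: "Y \<subseteq> verts G"
    and st: "gstep s G Y Y'"
  shows "gstep s (gmap f G) (f ` Y) (f ` Y')"
proof -
  obtain u w where u: "u \<in> (if s then Y else verts G)"
    and wh: "{x \<in> nbhd G u. x \<notin> Y} = {w}" and Y': "Y' = insert w Y"
    using st unfolding gstep_def by blast
  have uV: "u \<in> verts G" using u Y by (cases s) auto
  have "{x \<in> nbhd (gmap f G) (f u). x \<notin> f ` Y} = f ` {x \<in> nbhd G u. x \<notin> Y}"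
  proof -
    have fy: "(f y \<in> f ` Y) = (y \<in> Y)" if y: "y \<in> verts G" for y
    proof
      assume "f y \<in> f ` Y"
      then obtain y' where "y' \<in> Y" "f y = f y'" by blast
      moreover then have "y = y'" using inj y Y by (auto simp: inj_on_def)
      ultimately show "y \<in> Y" by simp
    qed simp
    show ?thesis unfolding nbhd_gmap[OF inj sG uV]
    proof (rule Set.set_eqI)
      fix x
      show "x \<in> {x \<in> f ` nbhd G u. x \<notin> f ` Y} \<longleftrightarrow> x \<in> f ` {x \<in> nbhd G u. x \<notin> Y}"
      proof
        assume "x \<in> {x \<in> f ` nbhd G u. x \<notin> f ` Y}"
        then obtain y where "y \<in> nbhd G u" "x = f y" "f y \<notin> f ` Y" by blast
        then show "x \<in> f ` {x \<in> nbhd G u. x \<notin> Y}" by blast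
      next
        assume "x \<in> f ` {x \<in> nbhd G u. x \<notin> Y}"
        then obtain y where y: "y \<in> nbhd G u" "x = f y" "y \<notin> Y" by blast
        then have yv: "y \<in> verts G" using nbhd_sub[of G u] by blast
        have n: "f y \<notin> f ` Y" using fy[OF yv] y(3) by simp
        have "f y \<in> f ` nbhd G u" using y(1) by (rule imageI)
        then show "x \<in> {x \<in> f ` nbhd G u. x \<notin> f ` Y}" using n y(2) by simp
      qed
    qed
  qed
  then have "{x \<in> nbhd (gmap f G) (f u). x \<notin> f ` Y} = {f w}" using wh by simp
  moreover have "f u \<in> (if s then f ` Y else verts (gmap f G))" using u by (cases s) (auto simp: verts_gmap)
  moreover have "f ` Y' = insert (f w) (f ` Y)" using Y' by simp
  ultimately show ?thesis unfolding gstep_def by blast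
qed

lemma gzfs_gmap:
  assumes inj: "inj_on f (verts G)" and sG: "simple_graph G" and z: "gzfs s G S"
  shows "gzfs s (gmap f G) (f ` S)"
proof -
  have SV: "S \<subseteq> verts G" using z unfolding gzfs_def by simp
  have "(gstep s (gmap f G))\<^sup>*\<^sup>* (f ` S) (f ` Y)" if "(gstep s G)\<^sup>*\<^sup>* S Y" for Y
    using that
  proof (induction rule: rtranclp_induct)
    case base then show ?case by simp
  next
    case (step Y Y')
    have "Y \<subseteq> verts G" by (rule reach_sub[OF step(1) SV])
    then have "gstep s (gmap f G) (f ` Y) (f ` Y')" by (rule gstep_gmap[OF inj sG _ step(2)])
    with step(3) show ?case by (rule rtranclp.rtrancl_into_rtrancl)
  qed
  then show ?thesis using z unfolding gzfs_def verts_gmap by auto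
qed

lemma gZ_gmap_le:
  assumes inj: "inj_on f (verts G)" and sG: "simple_graph G"
  shows "gZ s (gmap f G) \<le> gZ s G"
proof -
  obtain S where S: "gzfs s G S" "card S = gZ s G" using gZ_ex by blast
  have "gzfs s (gmap f G) (f ` S)" by (rule gzfs_gmap[OF inj sG S(1)])
  moreover have "card (f ` S) = card S"
    using S(1) inj unfolding gzfs_def by (meson card_image inj_on_subset)
  ultimately show ?thesis using S(2) gZ_le by metis
qed

lemma graph_copy_gmap: "graph_copy i G = gmap (Pair i) G"
  by (simp add: graph_copy_def gmap_def)

lemma gmap_snd_copy: "gmap snd (graph_copy i G) = G"
proof -
  have "(\<lambda>e. snd ` e) ` (\<lambda>e. Pair i ` e) ` edges G = edges G"
    by (simp add: image_image)
  then show ?thesis by (simp add: graph_copy_def gmap_def image_image verts_def edges_def)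
qed

lemma inj_snd_copy: "inj_on snd (verts (graph_copy i G))"
  by (auto simp: graph_copy_def verts_def inj_on_def)

lemma simple_copy: "simple_graph G \<Longrightarrow> simple_graph (graph_copy i G)"
  unfolding graph_copy_gmap by (rule simple_gmap) (auto simp: inj_on_def)

lemma gZ_copy:
  assumes sG: "simple_graph G"
  shows "gZ s (graph_copy i G) = gZ s G"
proof -
  have "gZ s (graph_copy i G) \<le> gZ s G" unfolding graph_copy_gmap by (rule gZ_gmap_le[OF _ sG]) (auto simp: inj_on_def)
  moreover have "gZ s (gmap snd (graph_copy i G)) \<le> gZ s (graph_copy i G)"
    by (rule gZ_gmap_le[OF inj_snd_copy simple_copy[OF sG]])
  ultimately show ?thesis unfolding gmap_snd_copy by simp
qed

lemma verts_copy: "verts (graph_copy i G) = {i} \<times> verts G"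
  by (auto simp: graph_copy_def verts_def)

lemma hasnb_copy:
  assumes sG: "simple_graph G" and nb: "hasnb G"
  shows "hasnb (graph_copy i G)"
  unfolding hasnb_def
proof
  fix w assume "w \<in> verts (graph_copy i G)"
  then obtain v where v: "v \<in> verts G" "w = (i, v)" unfolding verts_copy by blast
  have "nbhd (graph_copy i G) w = Pair i ` nbhd G v"
    unfolding graph_copy_gmap v(2) by (rule nbhd_gmap[OF _ sG v(1)]) (auto simp: inj_on_def)
  then show "nbhd (graph_copy i G) w \<noteq> {}" using nb v(1) unfolding hasnb_def by simp
qed

lemma iter_facts:
  assumes sG: "simple_graph G" and ne: "verts G \<noteq> {}"
  shows "verts (iter_join k G) = {..k} \<times> verts G \<and> simple_graph (iter_join k G)"
proof (induction k)
  case 0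
  then show ?case using simple_copy[OF sG] by (simp add: verts_copy)
next
  case (Suc k)
  interpret jn "iter_join k G" "graph_copy (Suc k) G"
    by unfold_locales (use Suc simple_copy[OF sG] in \<open>auto simp: verts_copy\<close>)
  show ?case using Suc simple_join by (auto simp: verts_join verts_copy)
qed

lemma hasnb_iter:
  assumes sG: "simple_graph G" and ne: "verts G \<noteq> {}" and nb: "hasnb G"
  shows "hasnb (iter_join k G)"
proof (cases k)
  case 0
  then show ?thesis using hasnb_copy[OF sG nb] by simp
next
  case (Suc j)
  interpret jn "iter_join j G" "graph_copy (Suc j) G"
    by unfold_locales (use iter_facts[OF sG ne, of j] simple_copy[OF sG] in \<open>auto simp: verts_copy\<close>)
  show ?thesis unfolding Suc iter_join.simps
    by (rule hasnb_join) (use iter_facts[OF sG ne, of j] ne in \<open>auto simp: verts_copy\<close>)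
qed

lemma card_iter:
  assumes sG: "simple_graph G" and ne: "verts G \<noteq> {}"
  shows "card (verts (iter_join k G)) = Suc k * card (verts G)"
  using iter_facts[OF sG ne, of k] by (simp add: card_cartesian_product)

lemma gZ_iter:
  assumes sG: "simple_graph G" and ne: "verts G \<noteq> {}" and nb: "hasnb G"
  shows "gZ s (iter_join k G) = k * card (verts G) + gZ s G"
proof (induction k)
  case 0
  then show ?case using gZ_copy[OF sG] by simp
next
  case (Suc k)
  interpret jn "iter_join k G" "graph_copy (Suc k) G"
    by unfold_locales (use iter_facts[OF sG ne, of k] simple_copy[OF sG] in \<open>auto simp: verts_copy\<close>)
  have fG: "finite (verts G)" using sG unfolding simple_graph_def by simp
  have "gZ s (iter_join (Suc k) G) = min (gZ s (iter_join k G) + card (verts (graph_copy (Suc k) G)))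
      (gZ s (graph_copy (Suc k) G) + card (verts (iter_join k G)))"
    unfolding iter_join.simps
    by (rule gZ_join[OF hasnb_iter[OF sG ne nb] hasnb_copy[OF sG nb]])
       (use iter_facts[OF sG ne, of k] fG in \<open>auto simp: verts_copy\<close>)
  also have "\<dots> = Suc k * card (verts G) + gZ s G"
    using Suc card_iter[OF sG ne, of k] gZ_copy[OF sG, of s "Suc k"]
    by (simp add: verts_copy card_cartesian_product)
  finally show ?case .
qed

lemma hasnb_conn:
  assumes c: "connected_graph G" and two: "2 \<le> card (verts G)"
  shows "hasnb G"
  unfolding hasnb_def
proof
  fix w assume w: "w \<in> verts G"
  have sG: "simple_graph G" using c unfolding connected_graph_def by simp
  have fG: "finite (verts G)" using sG unfolding simple_graph_def by simp
  have "\<not> verts G \<subseteq> {w}"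
  proof
    assume "verts G \<subseteq> {w}"
    then have "card (verts G) \<le> card {w}" by (rule card_mono[rotated]) simp
    then show False using two by simp
  qed
  then obtain y where y: "y \<in> verts G" "y \<noteq> w" by blast
  have r: "(w, y) \<in> {(x, y). adj G x y}\<^sup>*" using c w y unfolding connected_graph_def by blast
  have "\<exists>z. adj G w z"
  proof (rule converse_rtranclE[OF r])
    show "w = y \<Longrightarrow> \<exists>z. adj G w z" using y(2) by simp
    show "\<And>z. (w, z) \<in> {(x, y). adj G x y} \<Longrightarrow> (z, y) \<in> {(x, y). adj G x y}\<^sup>* \<Longrightarrow> \<exists>z. adj G w z" by blast
  qed
  then obtain z where "adj G w z" by blast
  then have "z \<in> nbhd G w" using simple_adj[OF sG] unfolding nbhd_def by blast
  then show "nbhd G w \<noteq> {}" by blast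
qed

lemma gZ_one:
  assumes sG: "simple_graph G" and one: "card (verts G) = 1"
  shows "gZ s G = 1"
proof -
  obtain v where V: "verts G = {v}" using one card_1_singletonE by blast
  have "gZ s G \<le> 1" using gZ_le[of s G "verts G"] one by (simp add: gzfs_def)
  moreover have "gZ s G \<noteq> 0"
  proof
    assume "gZ s G = 0"
    then obtain S where S: "gzfs s G S" "card S = 0" using gZ_ex by metis
    have "S \<subseteq> {v}" using S(1) V unfolding gzfs_def by simp
    then have "finite S" using finite_subset by blast
    then have "S = {}" using S(2) by simp
    then have r: "(gstep s G)\<^sup>*\<^sup>* {} {v}" using S V unfolding gzfs_def by simp
    have "\<exists>S2. gstep s G {} S2"
    proof (rule converse_rtranclpE[OF r])
      show "{} = {v} \<Longrightarrow> \<exists>S2. gstep s G {} S2" by simp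
      show "\<And>y. gstep s G {} y \<Longrightarrow> (gstep s G)\<^sup>*\<^sup>* y {v} \<Longrightarrow> \<exists>S2. gstep s G {} S2" by blast
    qed
    then obtain S2 where "gstep s G {} S2" by blast
    then obtain u w where u: "u \<in> (if s then {} else verts G)" and wh: "{x \<in> nbhd G u. x \<notin> {}} = {w}"
      unfolding gstep_def by blast
    have "w \<in> nbhd G u" using wh by auto
    then have a: "adj G u w" unfolding nbhd_def by auto
    show False using simple_adj[OF sG a] V by auto
  qed
  ultimately show ?thesis by simp
qed

definition cmat :: "nat \<Rightarrow> (nat \<Rightarrow> nat \<Rightarrow> real) \<Rightarrow> real poly mat" where
  "cmat n M = mat n n (\<lambda>(i,j). (if i = j then [:0,1:] else 0) - [:M i j:])"

lemma cmat_carrier[simp]: "cmat n M \<in> carrier_mat n n" by (simp add: cmat_def)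
lemma cmat_dims[simp]: "dim_row (cmat n M) = n" "dim_col (cmat n M) = n" by (simp_all add: cmat_def)
lemma cmat_index[simp]: "i < n \<Longrightarrow> j < n \<Longrightarrow> cmat n M $$ (i,j) = (if i = j then [:0,1:] else 0) - [:M i j:]"
  by (simp add: cmat_def)

lemma perm_bij:
  assumes g: "bij_betw g {0..<n} V"
  shows "bij_betw (map_permutation {0..<n} g) {q. q permutes {0..<n}} {p. p permutes V}"
proof -
  let ?g' = "inv_into {0..<n} g"
  have g': "bij_betw ?g' V {0..<n}" using g by (rule bij_betw_inv_into)
  have gg': "\<And>x. x \<in> V \<Longrightarrow> g (?g' x) = x" using g by (simp add: bij_betw_inv_into_right)
  have g'g: "\<And>x. x \<in> {0..<n} \<Longrightarrow> ?g' (g x) = x" using g by (simp add: bij_betw_inv_into_left)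
  show ?thesis
  proof (rule bij_betw_byWitness[where f' = "map_permutation V ?g'"])
    show "\<forall>q\<in>{q. q permutes {0..<n}}. map_permutation V ?g' (map_permutation {0..<n} g q) = q"
      using map_permutation_compose_inv[OF g _ g'g] by auto
    show "\<forall>p\<in>{p. p permutes V}. map_permutation {0..<n} g (map_permutation V ?g' p) = p"
      using map_permutation_compose_inv[OF g' _ gg'] by auto
    show "map_permutation {0..<n} g ` {q. q permutes {0..<n}} \<subseteq> {p. p permutes V}"
      using map_permutation_permutes[OF g] by auto
    show "map_permutation V ?g' ` {p. p permutes V} \<subseteq> {q. q permutes {0..<n}}"
      using map_permutation_permutes[OF g'] by auto
  qed
qed

lemma charpoly_transfer:
  assumes g: "bij_betw g {0..<n} V"
  shows "charpoly_on V M = det (cmat n (\<lambda>i j. M (g i) (g j)))"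
proof -
  let ?h = "map_permutation {0..<n} g"
  let ?F = "\<lambda>p v. (if v = p v then [:0,1:] else 0) - [:M v (p v):]"
  let ?C = "cmat n (\<lambda>i j. M (g i) (g j))"
  have inj: "inj_on g {0..<n}" using g by (rule bij_betw_imp_inj_on)
  have "charpoly_on V M = (\<Sum>p\<in>{p. p permutes V}. of_int (sign p) * (\<Prod>v\<in>V. ?F p v))"
    by (simp add: charpoly_on_def)
  also have "\<dots> = (\<Sum>q\<in>{q. q permutes {0..<n}}. of_int (sign (?h q)) * (\<Prod>v\<in>V. ?F (?h q) v))"
    by (rule sum.reindex_bij_betw[OF perm_bij[OF g], symmetric])
  also have "\<dots> = (\<Sum>q\<in>{q. q permutes {0..<n}}. signof q * (\<Prod>i=0..<n. ?C $$ (i, q i)))"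
  proof (rule sum.cong[OF refl])
    fix q assume q: "q \<in> {q. q permutes {0..<n}}"
    then have qp: "q permutes {0..<n}" by simp
    have s: "sign (?h q) = sign q" by (rule sign_map_permutation[OF inj qp]) simp
    have p1: "(\<Prod>v\<in>V. ?F (?h q) v) = (\<Prod>i\<in>{0..<n}. ?F (?h q) (g i))"
      by (rule prod.reindex_bij_betw[OF g, symmetric])
    have p2: "?F (?h q) (g i) = ?C $$ (i, q i)" if i: "i \<in> {0..<n}" for i
    proof -
      have qi: "q i \<in> {0..<n}" using qp i by (simp add: permutes_in_image)
      have "?h q (g i) = g (q i)" by (rule map_permutation_apply[OF inj i])
      moreover have "(g i = g (q i)) = (i = q i)" using inj i qi by (auto dest: inj_onD)
      ultimately show ?thesis using i qi by simp
    qed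
    have p3: "(\<Prod>i\<in>{0..<n}. ?F (?h q) (g i)) = (\<Prod>i=0..<n. ?C $$ (i, q i))"
      by (rule prod.cong) (auto simp: p2)
    show "of_int (sign (?h q)) * (\<Prod>v\<in>V. ?F (?h q) v) = signof q * (\<Prod>i=0..<n. ?C $$ (i, q i))"
      using s p1 p3 by simp
  qed
  also have "\<dots> = det ?C"
    by (rule det_def'[symmetric]) simp
  finally show ?thesis .
qed

lemma det_block:
  assumes z: "\<And>i j. a \<le> i \<Longrightarrow> i < a + b \<Longrightarrow> j < a \<Longrightarrow> M i j = 0"
  shows "det (cmat (a+b) M) = det (cmat a M) * det (cmat b (\<lambda>i j. M (a+i) (a+j)))"
proof -
  have "cmat (a+b) M = four_block_mat (cmat a M) (mat a b (\<lambda>(i,j). - [:M i (a+j):])) (0\<^sub>m b a) (cmat b (\<lambda>i j. M (a+i) (a+j)))"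
  proof (rule eq_matI)
    fix i j assume i: "i < dim_row (four_block_mat (cmat a M) (mat a b (\<lambda>(i,j). - [:M i (a+j):])) (0\<^sub>m b a) (cmat b (\<lambda>i j. M (a+i) (a+j))))"
      and j: "j < dim_col (four_block_mat (cmat a M) (mat a b (\<lambda>(i,j). - [:M i (a+j):])) (0\<^sub>m b a) (cmat b (\<lambda>i j. M (a+i) (a+j))))"
    then have i': "i < a + b" and j': "j < a + b" by auto
    show "cmat (a+b) M $$ (i,j) = four_block_mat (cmat a M) (mat a b (\<lambda>(i,j). - [:M i (a+j):])) (0\<^sub>m b a) (cmat b (\<lambda>i j. M (a+i) (a+j))) $$ (i,j)"
      using i' j' z[of i j] by (auto simp: cmat_index)
  qed auto
  then show ?thesis
    by (simp add: det_four_block_mat_lower_left_zero[of _ a _ b])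
qed

lemma prod_list_ones: "(\<And>x. x \<in> set xs \<Longrightarrow> x = 1) \<Longrightarrow> prod_list xs = (1::'a::monoid_mult)"
  by (induction xs) auto

lemma det_sim:
  fixes M :: "nat \<Rightarrow> nat \<Rightarrow> real"
  assumes r1: "\<And>i. i < m \<Longrightarrow> r i < c" and r2: "\<And>i. i < c \<Longrightarrow> r i = i" and c: "c \<le> m"
  defines "S \<equiv> \<lambda>i j. if j < c then (\<Sum>l\<in>{l. l < m \<and> r l = j}. M i l) else M i j"
  shows "det (cmat m M) = det (cmat m (\<lambda>i j. S i j - (if c \<le> i then S (r i) j else 0)))"
proof -
  define T :: "real poly mat" where "T = mat m m (\<lambda>(i,j). if i = j \<or> (j < c \<and> r i = j) then 1 else 0)"
  define Ti :: "real poly mat" where "Ti = mat m m (\<lambda>(i,j). if i = j then 1 else if c \<le> i \<and> j = r i then -1 else 0)"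
  let ?X = "cmat m M"
  let ?x = "[:0,1:] :: real poly"
  have Tc: "T \<in> carrier_mat m m" "Ti \<in> carrier_mat m m" by (simp_all add: T_def Ti_def)
  have dT: "det T = 1"
  proof -
    have "det T = prod_list (diag_mat T)"
    proof (rule det_lower_triangular[OF _ Tc(1)])
      fix i j assume ij: "i < j" "j < m"
      show "T $$ (i,j) = 0" using ij r2[of i] by (auto simp: T_def)
    qed
    also have "\<dots> = 1" by (rule prod_list_ones) (auto simp: diag_mat_def T_def)
    finally show ?thesis .
  qed
  have dTi: "det Ti = 1"
  proof -
    have "det Ti = prod_list (diag_mat Ti)"
    proof (rule det_lower_triangular[OF _ Tc(2)])
      fix i j assume ij: "i < j" "j < m"
      show "Ti $$ (i,j) = 0" using ij r1[of i] by (auto simp: Ti_def)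
    qed
    also have "\<dots> = 1" by (rule prod_list_ones) (auto simp: diag_mat_def Ti_def)
    finally show ?thesis .
  qed
  have XT: "(?X * T) $$ (k,j) = (if j < c then (if r k = j then ?x else 0) else (if k = j then ?x else 0)) - [:S k j:]"
    if k: "k < m" and j: "j < m" for k j
  proof -
    have e: "(?X * T) $$ (k,j) = (\<Sum>l\<in>{0..<m}. ?X $$ (k,l) * T $$ (l,j))"
      using k j by (simp add: scalar_prod_def T_def)
    show ?thesis
    proof (cases "j < c")
      case True
      have "(\<Sum>l\<in>{0..<m}. ?X $$ (k,l) * T $$ (l,j)) = (\<Sum>l\<in>{0..<m}. if r l = j then ?X $$ (k,l) else 0)"
        by (rule sum.cong) (use j True r2[of j] in \<open>auto simp: T_def\<close>)
      also have "\<dots> = (\<Sum>l\<in>{l \<in> {0..<m}. r l = j}. ?X $$ (k,l))"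
        by (rule sum.inter_filter[symmetric]) simp
      also have "\<dots> = (\<Sum>l\<in>{l \<in> {0..<m}. r l = j}. (if k = l then ?x else 0) - [:M k l:])"
        by (rule sum.cong) (use k in auto)
      also have "\<dots> = (\<Sum>l\<in>{l \<in> {0..<m}. r l = j}. (if k = l then ?x else 0)) - [:\<Sum>l\<in>{l \<in> {0..<m}. r l = j}. M k l:]"
        by (simp add: sum_subtractf sum_to_poly)
      also have "\<dots> = (if r k = j then ?x else 0) - [:S k j:]"
        using k True by (simp add: S_def conj_commute)
      finally show ?thesis using e True by simp
    next
      case False
      have "(\<Sum>l\<in>{0..<m}. ?X $$ (k,l) * T $$ (l,j)) = (\<Sum>l\<in>{0..<m}. if l = j then ?X $$ (k,l) else 0)"
        by (rule sum.cong) (use j False in \<open>auto simp: T_def\<close>)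
      also have "\<dots> = ?X $$ (k,j)" using j by simp
      finally show ?thesis using e False k j by (simp add: S_def)
    qed
  qed
  have R: "(Ti * (?X * T)) $$ (i,j) = (?X * T) $$ (i,j) - (if c \<le> i then (?X*T) $$ (r i, j) else 0)"
    if i: "i < m" and j: "j < m" for i j
  proof -
    let ?Y = "?X * T"
    have "(Ti * ?Y) $$ (i,j) = (\<Sum>k\<in>{0..<m}. Ti $$ (i,k) * ?Y $$ (k,j))"
      using i j Tc(1) by (simp add: scalar_prod_def Ti_def carrier_matD)
    also have "\<dots> = (\<Sum>k\<in>{0..<m}. (if k = i then ?Y $$ (k,j) else 0) + (if c \<le> i \<and> k = r i then - ?Y $$ (k,j) else 0))"
      by (rule sum.cong) (use i r1[of i] in \<open>auto simp: Ti_def\<close>)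
    also have "\<dots> = ?Y $$ (i,j) - (if c \<le> i then ?Y $$ (r i, j) else 0)"
      using i r1[of i] c by (simp add: sum.distrib)
    finally show ?thesis .
  qed
  have E: "Ti * (?X * T) = cmat m (\<lambda>i j. S i j - (if c \<le> i then S (r i) j else 0))"
  proof (rule eq_matI)
    fix i j assume "i < dim_row (cmat m (\<lambda>i j. S i j - (if c \<le> i then S (r i) j else 0)))"
      "j < dim_col (cmat m (\<lambda>i j. S i j - (if c \<le> i then S (r i) j else 0)))"
    then have i: "i < m" and j: "j < m" by auto
    have ri: "c \<le> i \<Longrightarrow> r i < c \<and> r i < m \<and> r (r i) = r i" using r1[OF i] r2[of "r i"] c by auto
    show "(Ti * (?X * T)) $$ (i,j) = cmat m (\<lambda>i j. S i j - (if c \<le> i then S (r i) j else 0)) $$ (i,j)"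
      unfolding R[OF i j]
      using i j ri r2[of i] by (cases "c \<le> i"; cases "j < c") (auto simp: XT)
  qed (auto simp: Ti_def T_def)
  have XTc: "?X * T \<in> carrier_mat m m" using Tc(1) by (metis cmat_carrier mult_carrier_mat)
  have "det (Ti * (?X * T)) = det Ti * (det ?X * det T)"
    using det_mult[OF Tc(2) XTc] det_mult[OF cmat_carrier Tc(1)] by simp
  then show ?thesis using E dT dTi by simp
qed


lemma cmat_cong: "(\<And>i j. i < n \<Longrightarrow> j < n \<Longrightarrow> M i j = M' i j) \<Longrightarrow> cmat n M = cmat n M'"
  unfolding cmat_def by (rule eq_matI) auto

lemma det_equit:
  fixes M :: "nat \<Rightarrow> nat \<Rightarrow> real"
  assumes r1: "\<And>i. i < m \<Longrightarrow> r i < c" and r2: "\<And>i. i < c \<Longrightarrow> r i = i" and c: "c \<le> m"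
    and eq: "\<And>i j. i < m \<Longrightarrow> j < c \<Longrightarrow> (\<Sum>l\<in>{l. l < m \<and> r l = j}. M i l) = (\<Sum>l\<in>{l. l < m \<and> r l = j}. M (r i) l)"
  shows "det (cmat m M) = det (cmat c (\<lambda>i j. \<Sum>l\<in>{l. l < m \<and> r l = j}. M i l)) *
     det (cmat (m - c) (\<lambda>i j. M (c+i) (c+j) - M (r (c+i)) (c+j)))"
proof -
  define S where "S = (\<lambda>i j. if j < c then (\<Sum>l\<in>{l. l < m \<and> r l = j}. M i l) else M i j)"
  define N where "N = (\<lambda>i j. S i j - (if c \<le> i then S (r i) j else 0))"
  have "det (cmat m M) = det (cmat m N)"
    unfolding N_def S_def by (rule det_sim[OF r1 r2 c])
  also have "\<dots> = det (cmat (c + (m - c)) N)" using c by simp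
  also have "\<dots> = det (cmat c N) * det (cmat (m - c) (\<lambda>i j. N (c+i) (c+j)))"
  proof (rule det_block)
    fix i j assume "c \<le> i" "i < c + (m - c)" "j < c"
    then show "N i j = 0" using eq[of i j] by (simp add: N_def S_def)
  qed
  also have "cmat c N = cmat c (\<lambda>i j. \<Sum>l\<in>{l. l < m \<and> r l = j}. M i l)"
    by (rule cmat_cong) (simp add: N_def S_def)
  also have "cmat (m - c) (\<lambda>i j. N (c+i) (c+j)) = cmat (m - c) (\<lambda>i j. M (c+i) (c+j) - M (r (c+i)) (c+j))"
    by (rule cmat_cong) (simp add: N_def S_def)
  finally show ?thesis .
qed

lemma bij_shift: "bij_betw (\<lambda>i. i - c) {c..<m} {0..<m - (c::nat)}"
  by (rule bij_betw_byWitness[where f'="\<lambda>i. i + c"]) auto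

lemma sum_fiber:
  fixes m :: nat
  assumes g: "bij_betw g {0..<m} V"
  shows "(\<Sum>l\<in>{l. l < m \<and> P (g l)}. f (g l)) = (\<Sum>v\<in>{v\<in>V. P v}. f v)"
proof (rule sum.reindex_bij_betw)
  show "bij_betw g {l. l < m \<and> P (g l)} {v \<in> V. P v}"
  proof (rule bij_betw_subset[OF g])
    show "{l. l < m \<and> P (g l)} \<subseteq> {0..<m}" by auto
    show "g ` {l. l < m \<and> P (g l)} = {v \<in> V. P v}"
    proof
      show "g ` {l. l < m \<and> P (g l)} \<subseteq> {v \<in> V. P v}" using g by (auto simp: bij_betw_def)
      show "{v \<in> V. P v} \<subseteq> g ` {l. l < m \<and> P (g l)}"
      proof
        fix v assume v: "v \<in> {v \<in> V. P v}"
        then obtain l where "l \<in> {0..<m}" "v = g l" using g by (auto simp: bij_betw_def)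
        then show "v \<in> g ` {l. l < m \<and> P (g l)}" using v by auto
      qed
    qed
  qed
qed

lemma charpoly_equit:
  fixes M :: "'a \<Rightarrow> 'a \<Rightarrow> real"
  assumes fin: "finite V" and R: "R \<subseteq> V" and rho1: "\<And>v. v \<in> V \<Longrightarrow> \<rho> v \<in> R"
    and rho2: "\<And>v. v \<in> R \<Longrightarrow> \<rho> v = v"
    and eq: "\<And>u w. u \<in> V \<Longrightarrow> w \<in> R \<Longrightarrow> (\<Sum>v\<in>{v\<in>V. \<rho> v = w}. M u v) = (\<Sum>v\<in>{v\<in>V. \<rho> v = w}. M (\<rho> u) v)"
  shows "charpoly_on V M = charpoly_on R (\<lambda>u w. \<Sum>v\<in>{v\<in>V. \<rho> v = w}. M u v) *
      charpoly_on (V - R) (\<lambda>u v. M u v - M (\<rho> u) v)"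
proof -
  define c where "c = card R"
  define m where "m = card V"
  have finR: "finite R" using fin R finite_subset by blast
  have cm: "c \<le> m" unfolding c_def m_def using fin R by (simp add: card_mono)
  have cVR: "card (V - R) = m - c" unfolding c_def m_def using fin R finR by (simp add: card_Diff_subset)
  obtain gR where gR: "bij_betw gR {0..<c} R" using ex_bij_betw_nat_finite[OF finR] c_def by blast
  obtain gN where gN: "bij_betw gN {0..<m - c} (V - R)"
    using ex_bij_betw_nat_finite[of "V - R"] fin cVR by auto
  define g where "g = (\<lambda>i. if i < c then gR i else gN (i - c))"
  have g1: "bij_betw g {0..<c} R" using gR by (rule bij_betw_cong[THEN iffD1, rotated]) (auto simp: g_def)
  have g2': "bij_betw (gN \<circ> (\<lambda>i. i - c)) {c..<m} (V - R)" by (rule bij_betw_trans[OF bij_shift gN])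
  have g2: "bij_betw g {c..<m} (V - R)" using g2' by (rule bij_betw_cong[THEN iffD1, rotated]) (auto simp: g_def)
  have "bij_betw g ({0..<c} \<union> {c..<m}) (R \<union> (V - R))"
    by (rule bij_betw_combine[OF g1 g2]) auto
  moreover have "{0..<c} \<union> {c..<m} = {0..<m}" using cm by auto
  moreover have "R \<union> (V - R) = V" using R by auto
  ultimately have g: "bij_betw g {0..<m} V" by simp
  define r where "r = (\<lambda>i. inv_into {0..<c} gR (\<rho> (g i)))"
  have gV: "i < m \<Longrightarrow> g i \<in> V" for i using g by (auto simp: bij_betw_def)
  have r1: "r i < c" if "i < m" for i
    using bij_betw_inv_into[OF gR] rho1[OF gV[OF that]] unfolding r_def by (auto simp: bij_betw_def)
  have gRr: "gR (r i) = \<rho> (g i)" if "i < m" for i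
    using bij_betw_inv_into_right[OF gR rho1[OF gV[OF that]]] unfolding r_def .
  have r2: "r i = i" if "i < c" for i
  proof -
    have "g i = gR i" using that by (simp add: g_def)
    moreover have "gR i \<in> R" using gR that by (auto simp: bij_betw_def)
    ultimately show ?thesis unfolding r_def using rho2 bij_betw_inv_into_left[OF gR] that by simp
  qed
  have rj: "(r l = j) = (\<rho> (g l) = gR j)" if "l < m" "j < c" for l j
  proof
    assume "r l = j" then show "\<rho> (g l) = gR j" using gRr[OF that(1)] by simp
  next
    assume "\<rho> (g l) = gR j" then show "r l = j" unfolding r_def using bij_betw_inv_into_left[OF gR] that by simp
  qed
  have fib: "{l. l < m \<and> r l = j} = {l. l < m \<and> \<rho> (g l) = gR j}" if "j < c" for j
    using rj that by auto
  have gRR: "j < c \<Longrightarrow> gR j \<in> R" for j using gR by (auto simp: bij_betw_def)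
  have sumeq: "(\<Sum>l\<in>{l. l < m \<and> r l = j}. M u (g l)) = (\<Sum>v\<in>{v\<in>V. \<rho> v = gR j}. M u v)" if "j < c" for u j
    unfolding fib[OF that] by (rule sum_fiber[OF g])
  have "charpoly_on V M = det (cmat m (\<lambda>i j. M (g i) (g j)))" by (rule charpoly_transfer[OF g])
  also have "\<dots> = det (cmat c (\<lambda>i j. \<Sum>l\<in>{l. l < m \<and> r l = j}. M (g i) (g l))) *
     det (cmat (m - c) (\<lambda>i j. M (g (c+i)) (g (c+j)) - M (g (r (c+i))) (g (c+j))))"
  proof (rule det_equit[OF r1 r2 cm])
    fix i j assume ij: "i < m" "j < c"
    have "g (r i) = \<rho> (g i)" using gRr[OF ij(1)] r1[OF ij(1)] by (simp add: g_def)
    then show "(\<Sum>l\<in>{l. l < m \<and> r l = j}. M (g i) (g l)) = (\<Sum>l\<in>{l. l < m \<and> r l = j}. M (g (r i)) (g l))"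
      using sumeq[OF ij(2)] eq[OF gV[OF ij(1)] gRR[OF ij(2)]] by simp
  qed
  also have "cmat c (\<lambda>i j. \<Sum>l\<in>{l. l < m \<and> r l = j}. M (g i) (g l)) =
      cmat c (\<lambda>i j. (\<lambda>u w. \<Sum>v\<in>{v\<in>V. \<rho> v = w}. M u v) (gR i) (gR j))"
  proof (rule cmat_cong)
    fix i j assume "i < c" "j < c"
    then show "(\<Sum>l\<in>{l. l < m \<and> r l = j}. M (g i) (g l)) = (\<lambda>u w. \<Sum>v\<in>{v\<in>V. \<rho> v = w}. M u v) (gR i) (gR j)"
      using sumeq by (simp add: g_def)
  qed
  also have "cmat (m - c) (\<lambda>i j. M (g (c+i)) (g (c+j)) - M (g (r (c+i))) (g (c+j))) =
      cmat (m - c) (\<lambda>i j. (\<lambda>u v. M u v - M (\<rho> u) v) (gN i) (gN j))"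
  proof (rule cmat_cong)
    fix i j assume ij: "i < m - c" "j < m - c"
    have "g (r (c+i)) = \<rho> (g (c+i))" using gRr[of "c+i"] r1[of "c+i"] ij by (simp add: g_def)
    then show "M (g (c+i)) (g (c+j)) - M (g (r (c+i))) (g (c+j)) = (\<lambda>u v. M u v - M (\<rho> u) v) (gN i) (gN j)"
      by (simp add: g_def)
  qed
  finally show ?thesis
    using charpoly_transfer[OF gR] charpoly_transfer[OF gN] by simp
qed


lemma charpoly_single: "charpoly_on {a} M = [:- M a a, 1:]"
proof -
  have "{p. p permutes {a}} = {id}" by (auto simp: permutes_sing)
  then show ?thesis by (simp add: charpoly_on_def)
qed

lemma charpoly_shift:
  "charpoly_on V (\<lambda>u v. M u v + (if u = v then b else 0)) = pcompose (charpoly_on V M) [:-b, 1:]"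
  unfolding charpoly_on_def pcompose_sum pcompose_mult pcompose_prod
proof (rule sum.cong[OF refl])
  fix p
  have "(if v = p v then [:0,1:] else 0) - [:M v (p v) + (if v = p v then b else 0):] =
        pcompose ((if v = p v then [:0,1:] else 0) - [:M v (p v):]) [:-b, 1:]" for v
    by (cases "v = p v") (simp_all add: pcompose_diff pcompose_pCons algebra_simps)
  then show "of_int (sign p) * (\<Prod>v\<in>V. (if v = p v then [:0,1:] else 0) - [:M v (p v) + (if v = p v then b else 0):]) =
    pcompose (of_int (sign p)) [:-b, 1:] * (\<Prod>v\<in>V. pcompose ((if v = p v then [:0,1:] else 0) - [:M v (p v):]) [:-b, 1:])"
    by (simp add: of_int_poly)
qed

lemma charpoly_image:
  assumes fin: "finite V" and inj: "inj_on f V"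
  shows "charpoly_on (f ` V) M = charpoly_on V (\<lambda>u v. M (f u) (f v))"
proof -
  obtain g where g: "bij_betw g {0..<card V} V" using ex_bij_betw_nat_finite[OF fin] by blast
  have fg: "bij_betw (f \<circ> g) {0..<card V} (f ` V)"
    by (rule bij_betw_trans[OF g]) (use inj in \<open>simp add: bij_betw_imageI\<close>)
  show ?thesis using charpoly_transfer[OF g] charpoly_transfer[OF fg] by simp
qed

lemma charpoly_cong:
  assumes fin: "finite V" and eq: "\<And>u v. u \<in> V \<Longrightarrow> v \<in> V \<Longrightarrow> M u v = M' u v"
  shows "charpoly_on V M = charpoly_on V M'"
proof -
  obtain g where g: "bij_betw g {0..<card V} V" using ex_bij_betw_nat_finite[OF fin] by blast
  have gV: "i < card V \<Longrightarrow> g i \<in> V" for i using g by (auto simp: bij_betw_def)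
  have "cmat (card V) (\<lambda>i j. M (g i) (g j)) = cmat (card V) (\<lambda>i j. M' (g i) (g j))"
    by (rule cmat_cong) (simp add: eq gV)
  then show ?thesis using charpoly_transfer[OF g, of M] charpoly_transfer[OF g, of M'] by simp
qed

lemma bij_concat:
  fixes a b :: nat
  assumes gX: "bij_betw gX {0..<a} X" and gY: "bij_betw gY {0..<b} Y" and d: "X \<inter> Y = {}"
  shows "bij_betw (\<lambda>i. if i < a then gX i else gY (i - a)) {0..<a+b} (X \<union> Y)"
proof -
  let ?g = "\<lambda>i. if i < a then gX i else gY (i - a)"
  have g1: "bij_betw ?g {0..<a} X" using gX by (rule bij_betw_cong[THEN iffD1, rotated]) auto
  have g2': "bij_betw (gY \<circ> (\<lambda>i. i - a)) {a..<a+b} Y"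
    by (rule bij_betw_trans[OF _ gY]) (use bij_shift[of a "a+b"] in simp)
  have g2: "bij_betw ?g {a..<a+b} Y" using g2' by (rule bij_betw_cong[THEN iffD1, rotated]) auto
  have "bij_betw ?g ({0..<a} \<union> {a..<a+b}) (X \<union> Y)"
    by (rule bij_betw_combine[OF g1 g2 d])
  moreover have "{0..<a} \<union> {a..<a+b} = {0..<a+b}" by auto
  ultimately show ?thesis by simp
qed

lemma charpoly_union:
  assumes fX: "finite X" and fY: "finite Y" and d: "X \<inter> Y = {}"
    and z: "\<And>u v. u \<in> Y \<Longrightarrow> v \<in> X \<Longrightarrow> M u v = 0"
  shows "charpoly_on (X \<union> Y) M = charpoly_on X M * charpoly_on Y M"
proof -
  obtain gX where gX: "bij_betw gX {0..<card X} X" using ex_bij_betw_nat_finite[OF fX] by blast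
  obtain gY where gY: "bij_betw gY {0..<card Y} Y" using ex_bij_betw_nat_finite[OF fY] by blast
  define a where "a = card X"
  define b where "b = card Y"
  define g where "g = (\<lambda>i. if i < a then gX i else gY (i - a))"
  have g: "bij_betw g {0..<a+b} (X \<union> Y)" unfolding g_def a_def b_def by (rule bij_concat[OF gX gY d])
  have gXX: "i < a \<Longrightarrow> gX i \<in> X" for i using gX a_def by (auto simp: bij_betw_def)
  have gYY: "i < b \<Longrightarrow> gY i \<in> Y" for i using gY b_def by (auto simp: bij_betw_def)
  have "charpoly_on (X \<union> Y) M = det (cmat (a+b) (\<lambda>i j. M (g i) (g j)))" by (rule charpoly_transfer[OF g])
  also have "\<dots> = det (cmat a (\<lambda>i j. M (g i) (g j))) * det (cmat b (\<lambda>i j. M (g (a+i)) (g (a+j))))"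
  proof (rule det_block)
    fix i j assume "a \<le> i" "i < a + b" "j < a"
    then show "M (g i) (g j) = 0" using z gXX gYY by (simp add: g_def)
  qed
  also have "cmat a (\<lambda>i j. M (g i) (g j)) = cmat a (\<lambda>i j. M (gX i) (gX j))"
    by (rule cmat_cong) (simp add: g_def)
  also have "cmat b (\<lambda>i j. M (g (a+i)) (g (a+j))) = cmat b (\<lambda>i j. M (gY i) (gY j))"
    by (rule cmat_cong) (simp add: g_def)
  finally show ?thesis using charpoly_transfer[OF gX] charpoly_transfer[OF gY] a_def b_def by simp
qed

lemma charpoly_nonzero:
  assumes fin: "finite V"
  shows "charpoly_on V M \<noteq> 0"
proof -
  obtain g where g: "bij_betw g {0..<card V} V" using ex_bij_betw_nat_finite[OF fin] by blast
  define A :: "real mat" where "A = mat (card V) (card V) (\<lambda>(i,j). M (g i) (g j))"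
  have "cmat (card V) (\<lambda>i j. M (g i) (g j)) = char_poly_matrix A"
    unfolding char_poly_matrix_def A_def cmat_def
    by (rule eq_matI) auto
  then have "charpoly_on V M = char_poly A" using charpoly_transfer[OF g] by (simp add: char_poly_def)
  moreover have "coeff (char_poly A) (card V) = 1" using degree_monic_char_poly[of A "card V"] A_def by simp
  ultimately show ?thesis by auto
qed

lemma pcompose_shift_nz:
  fixes p :: "real poly"
  assumes "p \<noteq> 0" shows "pcompose p [:-c, 1:] \<noteq> 0"
proof
  assume "pcompose p [:-c, 1:] = 0"
  then have "poly p (y + c - c) = 0" for y
    using poly_pcompose[of p "[:-c,1:]" "y + c"] by simp
  then have "\<forall>y. poly p y = 0" by simp
  then show False using assms poly_all_0_iff_0 by blast
qed

lemma proots_shift: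
  fixes p :: "real poly"
  assumes "p \<noteq> 0"
  shows "proots (pcompose p [:-c, 1:]) = image_mset (\<lambda>x. x + c) (proots p)"
  using assms
proof (induction "Polynomial.degree p" arbitrary: p rule: less_induct)
  case less
  show ?case
  proof (cases "\<exists>r. poly p r = 0")
    case True
    then obtain r where r: "poly p r = 0" by blast
    then obtain q where p: "p = [:-r,1:] * q" using poly_eq_0_iff_dvd by (metis dvdE)
    have q0: "q \<noteq> 0" using less.prems p by auto
    have "Polynomial.degree p = Polynomial.degree [:-r,1:] + Polynomial.degree q"
      unfolding p by (rule degree_mult_eq) (use q0 in auto)
    then have dq: "Polynomial.degree q < Polynomial.degree p" by simp
    have IH: "proots (pcompose q [:-c,1:]) = image_mset (\<lambda>x. x + c) (proots q)" by (rule less.hyps[OF dq q0])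
    have lin: "pcompose [:-r,1:] [:-c,1:] = [:-(r+c),1:]" by (simp add: pcompose_pCons)
    have qc0: "pcompose q [:-c,1:] \<noteq> 0" by (rule pcompose_shift_nz[OF q0])
    have "proots (pcompose p [:-c,1:]) = proots ([:-(r+c),1:] * pcompose q [:-c,1:])"
      by (simp only: p pcompose_mult lin)
    also have "\<dots> = proots [:-(r+c),1:] + proots (pcompose q [:-c,1:])"
      by (rule proots_mult) (use qc0 in auto)
    finally have e1: "proots (pcompose p [:-c,1:]) = {#r+c#} + proots (pcompose q [:-c,1:])" by simp
    have "proots p = proots [:-r,1:] + proots q" unfolding p by (rule proots_mult) (use q0 in auto)
    then have e2: "proots p = {#r#} + proots q" by simp
    show ?thesis using e1 e2 IH by simp
  next
    case False
    have "proots p = {#}"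
    proof (rule multiset_eqI)
      fix x show "count (proots p) x = count {#} x" using False less.prems order_root[of p x] by simp
    qed
    moreover have "proots (pcompose p [:-c,1:]) = {#}"
    proof (rule multiset_eqI)
      fix x
      have "poly (pcompose p [:-c,1:]) x \<noteq> 0" using False by (simp add: poly_pcompose)
      then show "count (proots (pcompose p [:-c,1:])) x = count {#} x"
        using pcompose_shift_nz[OF less.prems] order_root[of "pcompose p [:-c,1:]" x] by simp
    qed
    ultimately show ?thesis by simp
  qed
qed

lemma lap_rowsum:
  assumes sG: "simple_graph G" and u: "u \<in> verts G"
  shows "(\<Sum>v\<in>verts G. laplacian G u v) = 0"
proof -
  have fG: "finite (verts G)" using sG unfolding simple_graph_def by simp
  have "(\<Sum>v\<in>verts G. laplacian G u v) =
     (\<Sum>v\<in>verts G. (if v = u then real (degree G u) else 0) + (if adj G u v then -1 else 0))"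
  proof (rule sum.cong[OF refl])
    fix v assume "v \<in> verts G"
    show "laplacian G u v = (if v = u then real (degree G u) else 0) + (if adj G u v then -1 else 0)"
      using simple_adj[OF sG, of u v] by (auto simp: laplacian_def)
  qed
  also have "\<dots> = real (degree G u) + (\<Sum>v\<in>verts G. if adj G u v then -1 else 0)"
    using fG u by (simp add: sum.distrib)
  also have "(\<Sum>v\<in>verts G. if adj G u v then -1 else (0::real)) = (\<Sum>v\<in>{v\<in>verts G. adj G u v}. -1)"
    by (rule sum.inter_filter[OF fG, symmetric])
  also have "\<dots> = - real (degree G u)" by (simp add: degree_def nbhd_def)
  finally show ?thesis by simp
qed

lemma lap_gmap:
  assumes inj: "inj_on f (verts G)" and sG: "simple_graph G" and u: "u \<in> verts G" and v: "v \<in> verts G"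
  shows "laplacian (gmap f G) (f u) (f v) = laplacian G u v"
proof -
  have "degree (gmap f G) (f u) = degree G u"
    unfolding degree_def nbhd_gmap[OF inj sG u]
    by (rule card_image) (rule inj_on_subset[OF inj nbhd_sub])
  moreover have "(f u = f v) = (u = v)" using inj u v by (auto dest: inj_onD)
  ultimately show ?thesis unfolding laplacian_def using adj_gmap[OF inj sG u v] by (cases "u = v") auto
qed

lemma spec_copy:
  assumes sG: "simple_graph G"
  shows "lap_spectrum (graph_copy i G) = lap_spectrum G"
proof -
  have fG: "finite (verts G)" using sG unfolding simple_graph_def by simp
  have inj: "inj_on (Pair i) (verts G)" by (simp add: inj_on_def)
  have "charpoly_on (verts (graph_copy i G)) (laplacian (graph_copy i G)) =
      charpoly_on (Pair i ` verts G) (laplacian (gmap (Pair i) G))"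
    by (simp add: graph_copy_gmap verts_gmap)
  also have "\<dots> = charpoly_on (verts G) (\<lambda>u v. laplacian (gmap (Pair i) G) (Pair i u) (Pair i v))"
    by (rule charpoly_image[OF fG inj])
  also have "\<dots> = charpoly_on (verts G) (laplacian G)"
    by (rule charpoly_cong[OF fG]) (rule lap_gmap[OF inj sG])
  finally show ?thesis by (simp add: lap_spectrum_def)
qed

context jn
begin

lemma fin: "finite (verts A)" "finite (verts B)" using sA sB unfolding simple_graph_def by simp_all

lemma deg_A: "u \<in> verts A \<Longrightarrow> degree (graph_join A B) u = degree A u + card (verts B)"
  unfolding degree_def nbhd_A
  by (rule card_Un_disjoint) (use nbhd_sub[of A u] disj fin finite_subset in auto)

lemma lap_AA:
  assumes u: "u \<in> verts A" and v: "v \<in> verts A"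
  shows "laplacian (graph_join A B) u v = laplacian A u v + (if u = v then real (card (verts B)) else 0)"
proof -
  have "adj (graph_join A B) u v = adj A u v"
    unfolding adj_join using simple_adj[OF sB, of u v] u v disj by auto
  then show ?thesis unfolding laplacian_def using deg_A[OF u] by (cases "u = v") auto
qed

lemma lap_AB:
  assumes u: "u \<in> verts A" and v: "v \<in> verts B"
  shows "laplacian (graph_join A B) u v = -1"
proof -
  have "u \<noteq> v" using u v disj by auto
  moreover have "adj (graph_join A B) u v" unfolding adj_join using u v by simp
  ultimately show ?thesis unfolding laplacian_def by simp
qed

lemma sum_AA: "u \<in> verts A \<Longrightarrow> (\<Sum>v\<in>verts A. laplacian (graph_join A B) u v) = real (card (verts B))"
  using lap_rowsum[OF sA] fin by (simp add: lap_AA sum.distrib)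

lemma sum_AB: "u \<in> verts A \<Longrightarrow> (\<Sum>v\<in>verts B. laplacian (graph_join A B) u v) = - real (card (verts B))"
  by (simp add: lap_AB)

end

lemma charpoly_lap_split:
  assumes sA: "simple_graph A" and a0: "a0 \<in> verts A"
  shows "charpoly_on (verts A) (laplacian A) =
     [:0,1:] * charpoly_on (verts A - {a0}) (\<lambda>u v. laplacian A u v - laplacian A a0 v)"
proof -
  have fA: "finite (verts A)" using sA unfolding simple_graph_def by simp
  have fib: "{v \<in> verts A. a0 = a0} = verts A" by simp
  have "charpoly_on (verts A) (laplacian A) =
     charpoly_on {a0} (\<lambda>u w. \<Sum>v\<in>{v\<in>verts A. (\<lambda>_. a0) v = w}. laplacian A u v) *
     charpoly_on (verts A - {a0}) (\<lambda>u v. laplacian A u v - laplacian A ((\<lambda>_. a0) u) v)"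
  proof (rule charpoly_equit[OF fA])
    fix u w assume u: "u \<in> verts A" and w: "w \<in> {a0}"
    show "(\<Sum>v\<in>{v\<in>verts A. (\<lambda>_. a0) v = w}. laplacian A u v) = (\<Sum>v\<in>{v\<in>verts A. (\<lambda>_. a0) v = w}. laplacian A ((\<lambda>_. a0) u) v)"
      using w lap_rowsum[OF sA u] lap_rowsum[OF sA a0] by simp
  qed (use a0 in auto)
  also have "charpoly_on {a0} (\<lambda>u w. \<Sum>v\<in>{v\<in>verts A. (\<lambda>_. a0) v = w}. laplacian A u v) = [:0,1:]"
    using lap_rowsum[OF sA a0] by (simp add: charpoly_single)
  finally show ?thesis by simp
qed

lemma spec_join:
  assumes sA: "simple_graph A" and sB: "simple_graph B" and disj: "verts A \<inter> verts B = {}"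
    and neA: "verts A \<noteq> {}" and neB: "verts B \<noteq> {}"
  shows "lap_spectrum (graph_join A B) = {#0#} + {#real (card (verts A)) + real (card (verts B))#}
     + image_mset (\<lambda>x. x + real (card (verts B))) (lap_spectrum A - {#0#})
     + image_mset (\<lambda>x. x + real (card (verts A))) (lap_spectrum B - {#0#})"
proof -
  interpret jn A B by unfold_locales (use sA sB disj in auto)
  interpret BA: jn B A by unfold_locales (use sA sB disj in auto)
  let ?J = "graph_join A B"
  let ?L = "laplacian ?J"
  define a where "a = card (verts A)"
  define b where "b = card (verts B)"
  obtain a0 where a0: "a0 \<in> verts A" using neA by blast
  obtain b0 where b0: "b0 \<in> verts B" using neB by blast
  have ab: "a0 \<noteq> b0" "b0 \<noteq> a0" using a0 b0 disj by blast+
  have b0A: "b0 \<notin> verts A" using b0 disj by blast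
  have JBA: "graph_join B A = ?J" by (rule gjoin_comm[of B A])
  have LAA: "?L u v = laplacian A u v + (if u = v then real b else 0)" if "u \<in> verts A" "v \<in> verts A" for u v
    using lap_AA[OF that] b_def by simp
  have LBB: "?L u v = laplacian B u v + (if u = v then real a else 0)" if "u \<in> verts B" "v \<in> verts B" for u v
    using BA.lap_AA[OF that] JBA a_def by simp
  have LAB: "?L u v = -1" if "u \<in> verts A" "v \<in> verts B" for u v using lap_AB[OF that] .
  have LBA: "?L u v = -1" if "u \<in> verts B" "v \<in> verts A" for u v using BA.lap_AB[OF that] JBA by simp
  have sAA: "(\<Sum>v\<in>verts A. ?L u v) = real b" if "u \<in> verts A" for u using sum_AA[OF that] b_def by simp
  have sAB: "(\<Sum>v\<in>verts B. ?L u v) = - real b" if "u \<in> verts A" for u using sum_AB[OF that] b_def by simp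
  have sBB: "(\<Sum>v\<in>verts B. ?L u v) = real a" if "u \<in> verts B" for u using BA.sum_AA[OF that] JBA a_def by simp
  have sBA: "(\<Sum>v\<in>verts A. ?L u v) = - real a" if "u \<in> verts B" for u using BA.sum_AB[OF that] JBA a_def by simp
  define V where "V = verts A \<union> verts B"
  define rh where "rh = (\<lambda>v. if v \<in> verts A then a0 else b0)"
  have fV: "finite V" using fin V_def by simp
  have fibA: "{v\<in>V. rh v = a0} = verts A" using ab by (auto simp: V_def rh_def)
  have fibB: "{v\<in>V. rh v = b0} = verts B" using ab disj by (auto simp: V_def rh_def)
  define Q where "Q = (\<lambda>u w. \<Sum>v\<in>{v\<in>V. rh v = w}. ?L u v)"
  define M2 where "M2 = (\<lambda>u v. ?L u v - ?L (rh u) v)"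
  have step1: "charpoly_on V ?L = charpoly_on {a0,b0} Q * charpoly_on (V - {a0,b0}) M2"
    unfolding Q_def M2_def
  proof (rule charpoly_equit[OF fV])
    show "{a0,b0} \<subseteq> V" using a0 b0 V_def by auto
    show "\<And>v. v \<in> V \<Longrightarrow> rh v \<in> {a0,b0}" by (simp add: rh_def)
    show "\<And>v. v \<in> {a0,b0} \<Longrightarrow> rh v = v" using a0 b0A by (auto simp: rh_def)
    fix u w assume u: "u \<in> V" and w: "w \<in> {a0,b0}"
    have w': "w = a0 \<or> w = b0" using w by simp
    show "(\<Sum>v\<in>{v\<in>V. rh v = w}. ?L u v) = (\<Sum>v\<in>{v\<in>V. rh v = w}. ?L (rh u) v)"
    proof (cases "u \<in> verts A")
      case True
      then have ru: "rh u = a0" by (simp add: rh_def)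
      show ?thesis using w' True a0 unfolding ru by (elim disjE) (simp_all add: fibA fibB sAA sAB)
    next
      case False
      then have uB: "u \<in> verts B" using u V_def by simp
      have ru: "rh u = b0" using False by (simp add: rh_def)
      show ?thesis using w' uB b0 unfolding ru by (elim disjE) (simp_all add: fibA fibB sBB sBA)
    qed
  qed
  have Qv: "Q a0 a0 = real b" "Q a0 b0 = - real b" "Q b0 a0 = - real a" "Q b0 b0 = real a"
    using a0 b0 by (simp_all add: Q_def fibA fibB sAA sAB sBB sBA)
  have step2: "charpoly_on {a0,b0} Q = [:0,1:] * [:- (real a + real b), 1:]"
  proof -
    have "charpoly_on {a0,b0} Q = charpoly_on {a0} (\<lambda>u w. \<Sum>v\<in>{v\<in>{a0,b0}. (\<lambda>_. a0) v = w}. Q u v) *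
        charpoly_on ({a0,b0} - {a0}) (\<lambda>u v. Q u v - Q ((\<lambda>_. a0) u) v)"
    proof (rule charpoly_equit)
      fix u w assume u: "u \<in> {a0,b0}" and w: "w \<in> {a0}"
      show "(\<Sum>v\<in>{v\<in>{a0,b0}. (\<lambda>_. a0) v = w}. Q u v) = (\<Sum>v\<in>{v\<in>{a0,b0}. (\<lambda>_. a0) v = w}. Q ((\<lambda>_. a0) u) v)"
      proof -
        have f: "{v\<in>{a0,b0}. (\<lambda>_. a0) v = w} = {a0,b0}" using w by auto
        have sm: "(\<Sum>v\<in>{a0,b0}. Q x v) = Q x a0 + Q x b0" for x using ab by simp
        show ?thesis unfolding f sm using u Qv by auto
      qed
    qed auto
    also have "charpoly_on {a0} (\<lambda>u w. \<Sum>v\<in>{v\<in>{a0,b0}. (\<lambda>_. a0) v = w}. Q u v) = [:0,1:]"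
    proof -
      have f: "{v\<in>{a0,b0}. (\<lambda>_. a0) v = a0} = {a0,b0}" by auto
      show ?thesis unfolding charpoly_single f using ab Qv by simp
    qed
    also have "{a0,b0} - {a0} = {b0}" using ab by auto
    also have "charpoly_on {b0} (\<lambda>u v. Q u v - Q ((\<lambda>_. a0) u) v) = [:- (real a + real b), 1:]"
      unfolding charpoly_single using Qv by simp
    finally show ?thesis .
  qed
  define A' where "A' = verts A - {a0}"
  define B' where "B' = verts B - {b0}"
  have VAB: "V - {a0,b0} = A' \<union> B'" using disj a0 b0 by (auto simp: V_def A'_def B'_def)
  have step3: "charpoly_on (V - {a0,b0}) M2 = charpoly_on A' M2 * charpoly_on B' M2"
    unfolding VAB
  proof (rule charpoly_union)
    show "finite A'" "finite B'" using fin by (simp_all add: A'_def B'_def)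
    show "A' \<inter> B' = {}" using disj by (auto simp: A'_def B'_def)
    fix u v assume "u \<in> B'" "v \<in> A'"
    then have "u \<in> verts B" "u \<notin> verts A" "v \<in> verts A" using disj by (auto simp: A'_def B'_def)
    then show "M2 u v = 0" using LBA b0 by (simp add: M2_def rh_def)
  qed
  define qA where "qA = charpoly_on A' (\<lambda>u v. laplacian A u v - laplacian A a0 v)"
  define qB where "qB = charpoly_on B' (\<lambda>u v. laplacian B u v - laplacian B b0 v)"
  have step4A: "charpoly_on A' M2 = pcompose qA [:- real b, 1:]"
  proof -
    have "charpoly_on A' M2 = charpoly_on A' (\<lambda>u v. (laplacian A u v - laplacian A a0 v) + (if u = v then real b else 0))"
    proof (rule charpoly_cong)
      show "finite A'" using fin by (simp add: A'_def)
      fix u v assume "u \<in> A'" "v \<in> A'"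
      then have "u \<in> verts A" "v \<in> verts A" "v \<noteq> a0" by (auto simp: A'_def)
      then show "M2 u v = (laplacian A u v - laplacian A a0 v) + (if u = v then real b else 0)"
        using LAA a0 by (simp add: M2_def rh_def)
    qed
    then show ?thesis unfolding qA_def by (simp add: charpoly_shift)
  qed
  have step4B: "charpoly_on B' M2 = pcompose qB [:- real a, 1:]"
  proof -
    have "charpoly_on B' M2 = charpoly_on B' (\<lambda>u v. (laplacian B u v - laplacian B b0 v) + (if u = v then real a else 0))"
    proof (rule charpoly_cong)
      show "finite B'" using fin by (simp add: B'_def)
      fix u v assume "u \<in> B'" "v \<in> B'"
      then have "u \<in> verts B" "v \<in> verts B" "v \<noteq> b0" "u \<notin> verts A" using disj by (auto simp: B'_def)
      then show "M2 u v = (laplacian B u v - laplacian B b0 v) + (if u = v then real a else 0)"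
        using LBB b0 by (simp add: M2_def rh_def)
    qed
    then show ?thesis unfolding qB_def by (simp add: charpoly_shift)
  qed
  have cpA: "charpoly_on (verts A) (laplacian A) = [:0,1:] * qA"
    unfolding qA_def A'_def by (rule charpoly_lap_split[OF sA a0])
  have cpB: "charpoly_on (verts B) (laplacian B) = [:0,1:] * qB"
    unfolding qB_def B'_def by (rule charpoly_lap_split[OF sB b0])
  have qA0: "qA \<noteq> 0" using charpoly_nonzero[OF fin(1), of "laplacian A"] cpA by auto
  have qB0: "qB \<noteq> 0" using charpoly_nonzero[OF fin(2), of "laplacian B"] cpB by auto
  have specA: "proots qA = lap_spectrum A - {#0#}"
  proof -
    have "lap_spectrum A = proots [:0,1:] + proots qA"
      unfolding lap_spectrum_def cpA by (rule proots_mult) (use qA0 in auto)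
    then show ?thesis by simp
  qed
  have specB: "proots qB = lap_spectrum B - {#0#}"
  proof -
    have "lap_spectrum B = proots [:0,1:] + proots qB"
      unfolding lap_spectrum_def cpB by (rule proots_mult) (use qB0 in auto)
    then show ?thesis by simp
  qed
  have pA0: "pcompose qA [:- real b, 1:] \<noteq> 0" by (rule pcompose_shift_nz[OF qA0])
  have pB0: "pcompose qB [:- real a, 1:] \<noteq> 0" by (rule pcompose_shift_nz[OF qB0])
  have cpJ: "charpoly_on V ?L = ([:0,1:] * [:- (real a + real b), 1:]) * (pcompose qA [:- real b, 1:] * pcompose qB [:- real a, 1:])"
    using step1 step2 step3 step4A step4B by simp
  have "lap_spectrum ?J = proots (charpoly_on V ?L)" by (simp add: lap_spectrum_def V_def verts_join)
  also have "\<dots> = proots ([:0,1:] * [:- (real a + real b), 1:]) + proots (pcompose qA [:- real b, 1:] * pcompose qB [:- real a, 1:])"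
    unfolding cpJ by (rule proots_mult) (use pA0 pB0 in auto)
  also have "proots ([:0,1:] * [:- (real a + real b), 1:]) = proots [:0,1:] + proots [:- (real a + real b), 1:]"
    by (rule proots_mult) auto
  also have "proots (pcompose qA [:- real b, 1:] * pcompose qB [:- real a, 1:]) =
      proots (pcompose qA [:- real b, 1:]) + proots (pcompose qB [:- real a, 1:])"
    by (rule proots_mult[OF pA0 pB0])
  also have "proots (pcompose qA [:- real b, 1:]) = image_mset (\<lambda>x. x + real b) (proots qA)"
    by (rule proots_shift[OF qA0])
  also have "proots (pcompose qB [:- real a, 1:]) = image_mset (\<lambda>x. x + real a) (proots qB)"
    by (rule proots_shift[OF qB0])
  finally show ?thesis unfolding specA specB a_def b_def by (simp add: add.assoc)
qed


lemma card_copy: "card (verts (graph_copy i G)) = card (verts G)"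
  by (simp add: verts_copy card_cartesian_product)

lemma spec_iter:
  assumes sG: "simple_graph G" and sH: "simple_graph H" and neG: "verts G \<noteq> {}" and neH: "verts H \<noteq> {}"
    and cd: "card (verts G) = card (verts H)" and sp: "lap_spectrum G = lap_spectrum H"
  shows "lap_spectrum (iter_join k G) = lap_spectrum (iter_join k H)"
proof (induction k)
  case 0
  then show ?case using spec_copy[OF sG] spec_copy[OF sH] sp by simp
next
  case (Suc k)
  have jG: "lap_spectrum (iter_join (Suc k) G) = {#0#} + {#real (card (verts (iter_join k G))) + real (card (verts (graph_copy (Suc k) G)))#}
     + image_mset (\<lambda>x. x + real (card (verts (graph_copy (Suc k) G)))) (lap_spectrum (iter_join k G) - {#0#})
     + image_mset (\<lambda>x. x + real (card (verts (iter_join k G)))) (lap_spectrum (graph_copy (Suc k) G) - {#0#})"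
    unfolding iter_join.simps
    by (rule spec_join) (use iter_facts[OF sG neG, of k] simple_copy[OF sG] neG in \<open>auto simp: verts_copy\<close>)
  have jH: "lap_spectrum (iter_join (Suc k) H) = {#0#} + {#real (card (verts (iter_join k H))) + real (card (verts (graph_copy (Suc k) H)))#}
     + image_mset (\<lambda>x. x + real (card (verts (graph_copy (Suc k) H)))) (lap_spectrum (iter_join k H) - {#0#})
     + image_mset (\<lambda>x. x + real (card (verts (iter_join k H)))) (lap_spectrum (graph_copy (Suc k) H) - {#0#})"
    unfolding iter_join.simps
    by (rule spec_join) (use iter_facts[OF sH neH, of k] simple_copy[OF sH] neH in \<open>auto simp: verts_copy\<close>)
  show ?case unfolding jG jH card_copy card_iter[OF sG neG] card_iter[OF sH neH] spec_copy[OF sG] spec_copy[OF sH]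
    using Suc.IH sp cd by simp
qed

theorem theorem4p6:
  fixes G :: "'a graph" and H :: "'b graph" and n :: nat
  assumes "connected_graph G" and "connected_graph H"
    and "card (verts G) = n" and "card (verts H) = n"
    and "lap_spectrum G = lap_spectrum H"
  shows "(Z G \<noteq> Z H \<longrightarrow> (\<forall>k\<ge>1. lap_spectrum (iter_join k G) = lap_spectrum (iter_join k H)
                                 \<and> Z (iter_join k G) \<noteq> Z (iter_join k H)))
       \<and> (Zskew G \<noteq> Zskew H \<longrightarrow> (\<forall>k\<ge>1. lap_spectrum (iter_join k G) = lap_spectrum (iter_join k H)
                                 \<and> Zskew (iter_join k G) \<noteq> Zskew (iter_join k H)))"
proof -
  have sG: "simple_graph G" and neG: "verts G \<noteq> {}" using assms(1) unfolding connected_graph_def by simp_all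
  have sH: "simple_graph H" and neH: "verts H \<noteq> {}" using assms(2) unfolding connected_graph_def by simp_all
  have fG: "finite (verts G)" using sG unfolding simple_graph_def by simp
  have spec_all: "lap_spectrum (iter_join k G) = lap_spectrum (iter_join k H)" for k
    by (rule spec_iter[OF sG sH neG neH]) (use assms in simp_all)
  have key: "\<forall>k. gZ s (iter_join k G) \<noteq> gZ s (iter_join k H)" if ne: "gZ s G \<noteq> gZ s H" for s
  proof -
    have n2: "2 \<le> n"
    proof (rule ccontr)
      assume "\<not> 2 \<le> n"
      moreover have "n \<noteq> 0" using neG fG assms(3) by auto
      ultimately have "n = 1" by simp
      then have "gZ s G = 1" "gZ s H = 1" using gZ_one[OF sG] gZ_one[OF sH] assms(3,4) by auto
      with ne show False by simp
    qed
    have nbG: "hasnb G" using hasnb_conn[OF assms(1)] n2 assms(3) by simp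
    have nbH: "hasnb H" using hasnb_conn[OF assms(2)] n2 assms(4) by simp
    show ?thesis using gZ_iter[OF sG neG nbG] gZ_iter[OF sH neH nbH] assms(3,4) ne by simp
  qed
  show ?thesis using key[of True] key[of False] spec_all unfolding Z_gZ Zskew_gZ by blast
qed

end
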